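(* Let $e\geq 2$, $N$ cyclic of order $2^e$, $G$ any subgroup of $\mathrm{Hol}(N)$, $H$ any subgroup of $G$ of index $2^e$, and $C=\mathrm{Core}_G(H)$. If $|H\cap N|\geq 4$, then $G/C$ is not isomorphic to any transitive subgroup of $\mathrm{Hol}(N)$.
   Context: $\mathrm{Hol}(N)=N\rtimes\mathrm{Aut}(N)$ acts on $N$ by $(\eta,\alpha)\cdot x=\eta\,\alpha(x)$, with $N$ identified with a normal subgroup of it; a subgroup is transitive if it acts transitively on $N$. $\mathrm{Core}_G(H)$ is the largest normal subgroup of $G$ contained in $H$. *)

theory Defs
  imports "HOL-Algebra.Algebra"
begin

text \<open>Elements are pairs (eta, alpha)
  with eta in N = {0..<2^e} and alpha a unit mod 2^e (i.e. the automorphism x |-> alpha*x).\<close>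

definition Hol :: "nat \<Rightarrow> (nat \<times> nat) monoid" where
  "Hol e = \<lparr> carrier = {(a, u). a < 2^e \<and> u < 2^e \<and> coprime u (2^e)},
             monoid.mult = (\<lambda>(a, u) (b, v). ((a + u * b) mod 2^e, (u * v) mod 2^e)),
             one = (0, 1) \<rparr>"

definition hol_act :: "nat \<Rightarrow> nat \<times> nat \<Rightarrow> nat \<Rightarrow> nat" where
  "hol_act e g x = (fst g + snd g * x) mod 2^e"

text \<open>N as the normal subgroup of translations of Hol(N).\<close>
definition transl :: "nat \<Rightarrow> (nat \<times> nat) set" where
  "transl e = {(a, 1) | a. a < 2^e}"

definition transitive_sub :: "nat \<Rightarrow> (nat \<times> nat) set \<Rightarrow> bool" where
  "transitive_sub e T \<longleftrightarrow> subgroup T (Hol e) \<and>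
     (\<forall>x < 2^e. \<forall>y < 2^e. \<exists>g \<in> T. hol_act e g x = y)"

definition core :: "('a, 'b) monoid_scheme \<Rightarrow> 'a set \<Rightarrow> 'a set" where
  "core G H = (\<Inter>g \<in> carrier G. (\<lambda>h. g \<otimes>\<^bsub>G\<^esub> h \<otimes>\<^bsub>G\<^esub> inv\<^bsub>G\<^esub> g) ` H)"

end

theory Submission
  imports Defs
begin

lemma coprime_pow2_iff: "0 < e \<Longrightarrow> coprime (u::nat) (2^e) \<longleftrightarrow> odd u"
  by simp

lemma one_less_pow2: "0 < e \<Longrightarrow> Suc 0 < (2::nat)^e"
  by (metis less_exp less_trans_Suc)

lemma even_mod_pow2 [simp]: "0 < e \<Longrightarrow> even ((x::nat) mod 2^e) \<longleftrightarrow> even x"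
proof -
  assume "0 < e"
  hence "(2::nat) dvd 2^e" by (simp add: dvd_power)
  thus ?thesis using dvd_mod_iff by blast
qed

lemma inv_mod_ex:
  assumes "odd (u::nat)" "0 < e"
  shows "\<exists>v. odd v \<and> v < 2^e \<and> (u * v) mod 2^e = 1"
proof -
  have "u \<noteq> 0" using assms odd_pos by fastforce
  then obtain x y where xy: "u * x = 2^e * y + gcd u (2^e)" using bezout_nat by blast
  have g: "gcd u (2^e) = 1" using assms coprime_pow2_iff coprime_iff_gcd_eq_1 by blast
  have m1: "(2::nat)^e > 1" using assms one_less_pow2 by simp
  have "(u * x) mod 2^e = 1" using xy g m1 by (simp add: mod_Suc)
  hence "(u * (x mod 2^e)) mod 2^e = 1" by (simp add: mod_mult_right_eq)
  moreover have "odd (x mod 2^e)"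
  proof
    assume "even (x mod 2^e)"
    hence "even (u * (x mod 2^e))" by simp
    moreover have "(2::nat) dvd 2^e" using assms(2) by (simp add: dvd_power)
    ultimately have "even ((u * (x mod 2^e)) mod 2^e)" using dvd_mod_iff by blast
    thus False using \<open>(u * (x mod 2^e)) mod 2^e = 1\<close> by simp
  qed
  ultimately show ?thesis using m1 by (intro exI[of _ "x mod 2^e"]) auto
qed

lemma Hol_carrier: "x \<in> carrier (Hol e) \<longleftrightarrow> fst x < 2^e \<and> snd x < 2^e \<and> coprime (snd x) (2^e)"
  by (cases x) (simp add: Hol_def)
lemma Hol_mult [simp]: "(a, u) \<otimes>\<^bsub>Hol e\<^esub> (b, v) = ((a + u * b) mod 2^e, (u * v) mod 2^e)"
  by (simp add: Hol_def)
lemma Hol_one [simp]: "\<one>\<^bsub>Hol e\<^esub> = (0, 1)"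
  by (simp add: Hol_def)

lemma neg_mod: "0 < (m::nat) \<Longrightarrow> ((m - x mod m) mod m + x) mod m = 0"
  by (smt (verit) add.commute cancel_comm_monoid_add_class.diff_cancel
    le_add_diff_inverse mod_add_right_eq mod_if mod_le_divisor not_gr_zero
    zero_less_diff)

lemma Hol_group: assumes "0 < e" shows "group (Hol e)"
proof (rule groupI)
  fix x y assume "x \<in> carrier (Hol e)" "y \<in> carrier (Hol e)"
  then show "x \<otimes>\<^bsub>Hol e\<^esub> y \<in> carrier (Hol e)" using assms
    by (cases x, cases y) (auto simp: Hol_carrier)
next
  show "\<one>\<^bsub>Hol e\<^esub> \<in> carrier (Hol e)" using assms one_less_pow2 by (simp add: Hol_carrier)
next
  fix x y z assume "x \<in> carrier (Hol e)" "y \<in> carrier (Hol e)" "z \<in> carrier (Hol e)"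
  then show "x \<otimes>\<^bsub>Hol e\<^esub> y \<otimes>\<^bsub>Hol e\<^esub> z = x \<otimes>\<^bsub>Hol e\<^esub> (y \<otimes>\<^bsub>Hol e\<^esub> z)"
  proof (cases x, cases y, cases z)
    fix a b aa ba ab bb assume e: "x = (a, b)" "y = (aa, ba)" "z = (ab, bb)"
    have 1: "(((a::nat)+b*aa) mod m + (b*ba mod m)*ab) mod m = (a + b*aa + b*ba*ab) mod m" for m
      by (metis mod_add_cong mod_mod_trivial mod_mult_left_eq)
    have 2: "((a::nat) + b*((aa+ba*ab) mod m)) mod m = (a + b*aa + b*ba*ab) mod m" for m
      by (metis (no_types, lifting) add.assoc add_mult_distrib2 mod_add_cong mod_mult_right_eq mult.assoc)
    have 3: "(b * ba mod m * bb) mod m = ((b::nat)*((ba*bb) mod m)) mod m" for m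
      by (metis mod_mult_right_eq ab_semigroup_mult_class.mult_ac(1) mod_mult_left_eq)
    show ?thesis by (simp only: e Hol_mult 1 2 3)
  qed
next
  fix x assume "x \<in> carrier (Hol e)"
  then show "\<one>\<^bsub>Hol e\<^esub> \<otimes>\<^bsub>Hol e\<^esub> x = x"
    by (cases x) (simp add: Hol_carrier)
next
  fix x assume x: "x \<in> carrier (Hol e)"
  obtain a u where xe: "x = (a, u)" by (cases x)
  have u: "odd u" "a < 2^e" "u < 2^e" using x assms by (auto simp: xe Hol_carrier)
  obtain v where v: "odd v" "v < 2^e" "(u * v) mod 2^e = 1" using inv_mod_ex u(1) assms by blast
  define b where "b = (2^e - (v * a) mod 2^e) mod 2^e"
  have "(b + v * a) mod 2^e = 0" unfolding b_def by (rule neg_mod) simp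
  moreover have "(v * u) mod 2^e = 1" using v(3) by (simp add: mult.commute)
  ultimately have "(b, v) \<otimes>\<^bsub>Hol e\<^esub> x = \<one>\<^bsub>Hol e\<^esub>" by (simp add: xe)
  moreover have "(b, v) \<in> carrier (Hol e)" using v assms by (simp add: Hol_carrier b_def)
  ultimately show "\<exists>y\<in>carrier (Hol e). y \<otimes>\<^bsub>Hol e\<^esub> x = \<one>\<^bsub>Hol e\<^esub>" by blast
qed

lemma Hol_pow_closed: "0 < e \<Longrightarrow> x \<in> carrier (Hol e) \<Longrightarrow> x [^]\<^bsub>Hol e\<^esub> (n::nat) \<in> carrier (Hol e)"
  by (rule monoid.nat_pow_closed[OF group.is_monoid[OF Hol_group]])

lemma pow_double: "0 < e \<Longrightarrow> x \<in> carrier (Hol e) \<Longrightarrow>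
  x [^]\<^bsub>Hol e\<^esub> ((2::nat)^Suc j) = x [^]\<^bsub>Hol e\<^esub> ((2::nat)^j) \<otimes>\<^bsub>Hol e\<^esub> x [^]\<^bsub>Hol e\<^esub> ((2::nat)^j)"
proof -
  assume "0 < e" "x \<in> carrier (Hol e)"
  have "(2::nat)^Suc j = 2^j + 2^j" by simp
  then show ?thesis using monoid.nat_pow_mult[OF group.is_monoid[OF Hol_group[OF \<open>0 < e\<close>]] \<open>x \<in> carrier (Hol e)\<close>, of "2^j" "2^j"]
    by (simp only:)
qed

lemma Hol_elem: assumes "0 < e" "x \<in> carrier (Hol e)"
  obtains b w where "x = (b, w)" "b < 2^e" "w < 2^e" "odd w"
proof -
  obtain b w where "x = (b, w)" by (cases x)
  moreover have "b < 2^e" "w < 2^e" "odd w" using assms calculation by (auto simp: Hol_carrier)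
  ultimately show ?thesis using that by blast
qed

lemma pow2_fst_dvd:
  assumes e: "0 < e" and x: "x \<in> carrier (Hol e)"
  shows "j \<le> e \<Longrightarrow> 2^j dvd fst (x [^]\<^bsub>Hol e\<^esub> ((2::nat)^j))"
proof (induction j)
  case 0 then show ?case by simp
next
  case (Suc j)
  obtain b w where bw: "x [^]\<^bsub>Hol e\<^esub> ((2::nat)^j) = (b, w)" "odd w"
    using Hol_elem[OF e Hol_pow_closed[OF e x]] by blast
  have jle: "j \<le> e" using Suc.prems by simp
  have "2^j dvd b" using Suc.IH[OF jle] unfolding bw(1) by simp
  moreover have "2 dvd (1 + w)" using bw by simp
  ultimately have A: "2^j * 2 dvd b * (1 + w)" by (rule mult_dvd_mono)
  have B: "b * (1 + w) = b + w * b" by (simp add: algebra_simps)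
  have C: "(2::nat)^Suc j = 2^j * 2" by simp
  have E: "2^Suc j dvd (b + w * b)" using A by (simp only: B C)
  have D: "(2::nat)^Suc j dvd 2^e" using le_imp_power_dvd[OF Suc.prems] .
  have "2^Suc j dvd (b + w * b) mod 2^e" using E by (simp only: dvd_mod_iff[OF D])
  moreover have "x [^]\<^bsub>Hol e\<^esub> ((2::nat)^Suc j) = (b, w) \<otimes>\<^bsub>Hol e\<^esub> (b, w)"
    using pow_double[OF e x, of j] unfolding bw(1) .
  moreover have "fst ((b, w) \<otimes>\<^bsub>Hol e\<^esub> (b, w)) = (b + w*b) mod 2^e" by (simp only: Hol_mult fst_conv)
  ultimately show ?case by (simp only:)
qed

lemma sq_mod: assumes "(w::nat) mod 2^k = 1" "1 \<le> k" shows "(w*w) mod 2^(k+1) = 1"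
proof -
  define q where "q = w div 2^k"
  have w: "w = 2^k * q + 1" using assms(1) unfolding q_def by (metis div_mult_mod_eq mult.commute)
  have ww: "w * w = (2^k*q)*(2^k*q) + 2*(2^k*q) + 1" using w by (simp add: algebra_simps)
  have d1: "(2::nat)^(k+1) dvd 2*(2^k*q)" by simp
  have "(2::nat)^(k+1) dvd 2^(k+k)" by (rule le_imp_power_dvd) (use assms(2) in simp)
  moreover have "(2::nat)^(k+k) = 2^k*2^k" by (rule power_add)
  moreover have "(2^k*q)*(2^k*q) = (2^k*2^k)*(q*q::nat)" by (simp only: ac_simps)
  ultimately have d2: "(2::nat)^(k+1) dvd (2^k*q)*(2^k*q)" by (metis dvd_mult2)
  have "(2::nat)^(k+1) dvd (2^k*q)*(2^k*q) + 2*(2^k*q)" using d2 d1 by (rule dvd_add)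
  then obtain t where t: "(2^k*q)*(2^k*q) + 2*(2^k*q) = 2^(k+1) * t" by (elim dvdE)
  have h1: "(1::nat) < 2^(k+1)" by (metis less_exp less_trans_Suc One_nat_def add_gr_0 zero_less_one)
  show ?thesis unfolding ww t by (simp only: mod_mult_self4) (rule mod_less[OF h1])
qed

lemma odd_sq_mod8: "odd (u::nat) \<Longrightarrow> (u*u) mod 8 = 1"
proof -
  assume "odd u"
  then obtain k where k: "u = 2*k+1" using oddE by blast
  have "even (k*(k+1))" by simp
  then obtain t where t: "k*(k+1) = 2*t" by (elim evenE)
  have "u*u = 4*(k*(k+1)) + 1" using k by (simp add: algebra_simps)
  also have "... = 8*t + 1" using t by simp
  finally have "u*u = 8*t+1" .
  then show ?thesis by simp
qed

lemma pow2_snd: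
  assumes e: "0 < e" and x: "x \<in> carrier (Hol e)"
  shows "k + 3 \<le> e \<Longrightarrow> snd (x [^]\<^bsub>Hol e\<^esub> ((2::nat)^(Suc k))) mod 2^(k+3) = 1"
proof (induction k)
  case 0
  obtain a u where au: "x = (a, u)" "odd u" using Hol_elem[OF e x] by blast
  have x1: "x [^]\<^bsub>Hol e\<^esub> ((2::nat)^0) = x"
    using monoid.nat_pow_eone[OF group.is_monoid[OF Hol_group[OF e]] x] by (simp only: power_0)
  have "x [^]\<^bsub>Hol e\<^esub> ((2::nat)^(Suc 0)) = x \<otimes>\<^bsub>Hol e\<^esub> x"
    using pow_double[OF e x, of 0] unfolding x1 .
  hence s: "snd (x [^]\<^bsub>Hol e\<^esub> ((2::nat)^(Suc 0))) = (u*u) mod 2^e" by (simp add: au)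
  have d: "(2::nat)^3 dvd 2^e" using le_imp_power_dvd[OF 0, where a="2::nat"] by simp
  have "(u*u mod 2^e) mod 2^3 = u*u mod 2^3" using d by (rule mod_mod_cancel)
  then show ?case unfolding s using odd_sq_mod8[OF au(2)] by simp
next
  case (Suc k)
  obtain b w where bw: "x [^]\<^bsub>Hol e\<^esub> ((2::nat)^Suc k) = (b, w)"
    using Hol_elem[OF e Hol_pow_closed[OF e x]] by blast
  have kle: "k + 3 \<le> e" using Suc.prems by simp
  have "w mod 2^(k+3) = 1" using Suc.IH[OF kle] unfolding bw by simp
  hence "(w*w) mod 2^(k+3+1) = 1" by (rule sq_mod) simp
  moreover have "(2::nat)^(Suc k + 3) dvd 2^e" using le_imp_power_dvd[OF Suc.prems] .
  moreover have "(w*w mod 2^e) mod 2^(Suc k + 3) = w*w mod 2^(Suc k + 3)" using calculation(2) by (rule mod_mod_cancel)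
  ultimately have "((w*w) mod 2^e) mod 2^(Suc k+3) = 1" by simp
  thus ?case by (subst pow_double[OF e x]) (simp only: bw Hol_mult snd_conv)
qed


lemma pow_one_eq: "0 < e \<Longrightarrow> x \<in> carrier (Hol e) \<Longrightarrow> x [^]\<^bsub>Hol e\<^esub> ((2::nat)^0) = x"
  using monoid.nat_pow_eone[OF group.is_monoid[OF Hol_group]] by (simp only: power_0)

lemma odd_part: "(a::nat) \<noteq> 0 \<Longrightarrow> \<exists>s c. a = 2^s * c \<and> odd c"
proof (induction a rule: less_induct)
  case (less a)
  show ?case
  proof (cases "odd a")
    case True then show ?thesis by (intro exI[of _ 0] exI[of _ a]) simp
  next
    case False
    then have "even a" by simp
    then obtain a' where a': "a = 2 * a'" by (rule evenE)
    with less.prems have "a' < a" "a' \<noteq> 0" by auto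
    then obtain s c where "a' = 2^s * c" "odd c" using less.IH by blast
    then show ?thesis using a' by (intro exI[of _ "Suc s"] exI[of _ c]) simp
  qed
qed

lemma exact_dvd: "odd (c::nat) \<Longrightarrow> \<not> 2^(k+1) dvd 2^k * c"
proof
  assume "odd c" "2^(k+1) dvd 2^k * c"
  hence "2^k * 2 dvd 2^k * c" by (simp add: mult.commute)
  hence "2 dvd c" by (subst (asm) nat_mult_dvd_cancel_disj) simp
  with \<open>odd c\<close> show False by simp
qed

lemma mod4_mod: "2 \<le> e \<Longrightarrow> ((x::nat) mod 2^e) mod 4 = x mod 4"
proof -
  assume "2 \<le> e"
  hence "(2::nat)^2 dvd 2^e" by (rule le_imp_power_dvd)
  hence "(4::nat) dvd 2^e" by simp
  thus ?thesis by (rule mod_mod_cancel)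
qed

lemma pow2_exact:
  assumes e: "2 \<le> e" and x: "x \<in> carrier (Hol e)" and u4: "snd x mod 4 = 1"
    and s1: "2^s dvd fst x" and s2: "\<not> 2^(s+1) dvd fst x"
  shows "s + j + 1 \<le> e \<Longrightarrow> 2^(s+j) dvd fst (x [^]\<^bsub>Hol e\<^esub> ((2::nat)^j)) \<and>
      \<not> 2^(s+j+1) dvd fst (x [^]\<^bsub>Hol e\<^esub> ((2::nat)^j)) \<and> snd (x [^]\<^bsub>Hol e\<^esub> ((2::nat)^j)) mod 4 = 1"
proof (induction j)
  case 0
  have e0: "0 < e" using e by simp
  show ?case using s1 s2 u4 unfolding pow_one_eq[OF e0 x] by simp
next
  case (Suc j)
  have e0: "0 < e" using e by simp
  obtain b w where bw: "x [^]\<^bsub>Hol e\<^esub> ((2::nat)^j) = (b, w)"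
    using Hol_elem[OF e0 Hol_pow_closed[OF e0 x]] by blast
  have jle: "s + j + 1 \<le> e" using Suc.prems by simp
  have IH: "2^(s+j) dvd b" "\<not> 2^(s+j+1) dvd b" "w mod 4 = 1" using Suc.IH[OF jle] unfolding bw by simp_all
  obtain c where c: "b = 2^(s+j) * c" using IH(1) by (elim dvdE)
  have oc: "odd c" using IH(2) c by auto
  have "(1 + w) mod 4 = 2" using IH(3) by presburger
  then have "1 + w = 2 * ((1 + w) div 2)" "odd ((1 + w) div 2)" by presburger+
  then obtain p where p: "1 + w = 2 * p" "odd p" by blast
  have bb: "b + w * b = 2^(s + Suc j) * (c * p)"
  proof -
    have "b + w * b = b * (1 + w)" by (simp add: algebra_simps)
    also have "... = 2^(s+j) * c * (2 * p)" using c p by simp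
    also have "... = 2^(s + Suc j) * (c * p)" by (simp add: algebra_simps)
    finally show ?thesis .
  qed
  have ocp: "odd (c * p)" using oc p by simp
  have D1: "(2::nat)^(s + Suc j) dvd 2^e" by (rule le_imp_power_dvd) (use Suc.prems in simp)
  have D2: "(2::nat)^(s + Suc j + 1) dvd 2^e" by (rule le_imp_power_dvd) (use Suc.prems in simp)
  have f1: "2^(s + Suc j) dvd (b + w * b) mod 2^e" unfolding dvd_mod_iff[OF D1] bb by simp
  have f2: "\<not> 2^(s + Suc j + 1) dvd (b + w * b) mod 2^e" unfolding dvd_mod_iff[OF D2] bb
    by (rule exact_dvd[OF ocp])
  have f3: "(w * w mod 2^e) mod 4 = 1" unfolding mod4_mod[OF e]
    using IH(3) by (metis mod_mult_eq mult_1 mod_mod_trivial)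
  have "x [^]\<^bsub>Hol e\<^esub> ((2::nat)^Suc j) = (b, w) \<otimes>\<^bsub>Hol e\<^esub> (b, w)"
    using pow_double[OF e0 x, of j] unfolding bw .
  also have "... = ((b + w * b) mod 2^e, w * w mod 2^e)" by (simp only: Hol_mult)
  finally show ?case using f1 f2 f3 by (simp only: fst_conv snd_conv simp_thms)
qed

lemma good_elem:
  assumes e: "3 \<le> e" and t: "t \<in> carrier (Hol e)" and u4: "snd t mod 4 = 1"
    and s: "s \<le> 1" and s1: "2^s dvd fst t" and s2: "\<not> 2^(s+1) dvd fst t"
  shows "t [^]\<^bsub>Hol e\<^esub> ((2::nat)^(e-2)) \<noteq> (0, 1)"
proof
  assume eq: "t [^]\<^bsub>Hol e\<^esub> ((2::nat)^(e-2)) = (0, 1)"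
  have "s + (e-2) + 1 \<le> e" using e s by simp
  from pow2_exact[OF _ t u4 s1 s2 this] e
  have "\<not> 2^(s+(e-2)+1) dvd fst (t [^]\<^bsub>Hol e\<^esub> ((2::nat)^(e-2)))" by simp
  then show False unfolding eq by simp
qed

lemma T_big:
  assumes e: "3 \<le> e" and T: "transitive_sub e T"
  shows "\<exists>t\<in>T. t [^]\<^bsub>Hol e\<^esub> ((2::nat)^(e-2)) \<noteq> (0, 1)"
proof -
  have e0: "0 < e" using e by simp
  have sg: "subgroup T (Hol e)" using T unfolding transitive_sub_def by blast
  have tr: "\<forall>y < 2^e. \<exists>g\<in>T. hol_act e g 0 = y" using T e0 unfolding transitive_sub_def by auto
  have "(1::nat) < 2^e" "(2::nat) < 2^e"
  proof -
    have "(2::nat)^1 < 2^e" "(2::nat)^0 < 2^e" using e by (intro power_strict_increasing; simp)+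
    thus "(1::nat) < 2^e" "(2::nat) < 2^e" by simp_all
  qed
  then obtain t1 t2 where t12: "t1 \<in> T" "hol_act e t1 0 = 1" "t2 \<in> T" "hol_act e t2 0 = 2"
    using tr by blast
  have c12: "t1 \<in> carrier (Hol e)" "t2 \<in> carrier (Hol e)"
    using subgroup.mem_carrier[OF sg t12(1)] subgroup.mem_carrier[OF sg t12(3)] .
  obtain a1 u1 where tt1: "t1 = (a1, u1)" "a1 < 2^e" "odd u1" using Hol_elem[OF e0 c12(1)] by blast
  obtain a2 u2 where tt2: "t2 = (a2, u2)" "a2 < 2^e" "odd u2" using Hol_elem[OF e0 c12(2)] by blast
  have a1: "a1 = 1" using t12(2) tt1 by (simp add: hol_act_def)
  have a2: "a2 = 2" using t12(4) tt2 by (simp add: hol_act_def)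
  have e2: "2 \<le> e" using e by simp
  show ?thesis
  proof (cases "u1 mod 4 = 1")
    case True
    have "t1 [^]\<^bsub>Hol e\<^esub> ((2::nat)^(e-2)) \<noteq> (0, 1)"
      by (rule good_elem[OF e c12(1), of 0]) (simp_all add: tt1 a1 True)
    then show ?thesis using t12 by blast
  next
    case F1: False
    hence u1: "u1 mod 4 = 3" using tt1(3) by presburger
    show ?thesis
    proof (cases "u2 mod 4 = 1")
      case True
      have "t2 [^]\<^bsub>Hol e\<^esub> ((2::nat)^(e-2)) \<noteq> (0, 1)"
        by (rule good_elem[OF e c12(2), of 1]) (simp_all add: tt2 a2 True)
      then show ?thesis using t12 by blast
    next
      case False
      hence u2: "u2 mod 4 = 3" using tt2(3) by presburger
      have m: "t1 \<otimes>\<^bsub>Hol e\<^esub> t2 \<in> T" using subgroup.m_closed[OF sg t12(1) t12(3)] .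
      have mc: "t1 \<otimes>\<^bsub>Hol e\<^esub> t2 \<in> carrier (Hol e)" using subgroup.mem_carrier[OF sg m] .
      have eq: "t1 \<otimes>\<^bsub>Hol e\<^esub> t2 = ((1 + u1 * 2) mod 2^e, (u1 * u2) mod 2^e)"
        by (simp add: tt1 tt2 a1 a2)
      have "(u1 * u2) mod 4 = ((u1 mod 4) * (u2 mod 4)) mod 4" by (simp add: mod_mult_eq)
      hence s4: "((u1 * u2) mod 2^e) mod 4 = 1" using u1 u2 by (simp add: mod4_mod[OF e2])
      have o: "odd ((1 + u1 * 2) mod 2^e)" using e0 by simp
      have "(t1 \<otimes>\<^bsub>Hol e\<^esub> t2) [^]\<^bsub>Hol e\<^esub> ((2::nat)^(e-2)) \<noteq> (0, 1)"
        by (rule good_elem[OF e mc, of 0]) (use s4 o in \<open>simp_all add: eq\<close>)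
      then show ?thesis using m by blast
    qed
  qed
qed


lemma G_small:
  assumes e: "3 \<le> e" and g: "g \<in> carrier (Hol e)"
  shows "\<exists>b. g [^]\<^bsub>Hol e\<^esub> ((2::nat)^(e-2)) = (b, 1) \<and> b < 2^e \<and> 2^(e-2) dvd b"
proof -
  have e0: "0 < e" using e by simp
  obtain b w where bw: "g [^]\<^bsub>Hol e\<^esub> ((2::nat)^(e-2)) = (b, w)" "b < 2^e" "w < 2^e"
    using Hol_elem[OF e0 Hol_pow_closed[OF e0 g]] by blast
  have "2^(e-2) dvd b" using pow2_fst_dvd[OF e0 g, of "e-2"] bw(1) by simp
  moreover have "w mod 2^e = 1"
  proof -
    have "e - 3 + 3 \<le> e" using e by simp
    from pow2_snd[OF e0 g this] have "snd (g [^]\<^bsub>Hol e\<^esub> ((2::nat)^(Suc (e-3)))) mod 2^(e-3+3) = 1" .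
    moreover have "Suc (e-3) = e-2" "e-3+3 = e" using e by simp_all
    ultimately show ?thesis using bw(1) by simp
  qed
  hence "w = 1" using bw(3) by simp
  ultimately show ?thesis using bw by blast
qed

lemma transl_pow:
  assumes e0: "0 < e" and a: "a < 2^e"
  shows "(a, 1) [^]\<^bsub>Hol e\<^esub> (k::nat) = ((a * k) mod 2^e, 1)"
proof (induction k)
  case 0 then show ?case by simp
next
  case (Suc k)
  have "(1::nat) mod 2^e = 1" using e0 by simp
  moreover have "((a * k) mod 2^e + a) mod 2^e = (a * Suc k) mod 2^e"
    by (metis mod_add_left_eq mult_Suc_right add.commute)
  ultimately show ?case using Suc by simp
qed

lemma pow_closed_set:
  assumes "\<forall>x\<in>H. \<forall>y\<in>H. x \<otimes>\<^bsub>Hol e\<^esub> y \<in> H" "(0, 1) \<in> H" "x \<in> H"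
  shows "x [^]\<^bsub>Hol e\<^esub> (k::nat) \<in> H"
  using assms by (induction k) simp_all

lemma N4_in_H:
  assumes e: "2 \<le> e" and Hsub: "H \<subseteq> carrier (Hol e)"
    and Hm: "\<forall>x\<in>H. \<forall>y\<in>H. x \<otimes>\<^bsub>Hol e\<^esub> y \<in> H" and H1: "(0, 1) \<in> H"
    and card: "4 \<le> card (H \<inter> transl e)"
  shows "b < 2^e \<Longrightarrow> 2^(e-2) dvd b \<Longrightarrow> (b, 1) \<in> H"
proof -
  assume b: "b < 2^e" "2^(e-2) dvd b"
  have e0: "0 < e" using e by simp
  have "\<exists>a. (a, 1) \<in> H \<and> a < 2^e \<and> \<not> 2^(e-1) dvd a"
  proof (rule ccontr)
    assume na: "\<not> ?thesis"
    have "H \<inter> transl e \<subseteq> {(0, 1), (2^(e-1), 1)}"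
    proof
      fix x assume x: "x \<in> H \<inter> transl e"
      then obtain a where xa: "x = (a, 1)" "a < 2^e" unfolding transl_def by blast
      with x na have "2^(e-1) dvd a" by blast
      then obtain q where q: "a = 2^(e-1) * q" by (elim dvdE)
      have "(2::nat)^e = 2^(e-1) * 2" using e0 by (metis Suc_diff_1 power_Suc2)
      hence "q < 2" using xa(2) q by (metis mult_less_cancel1)
      hence "q = 0 \<or> q = 1" by auto
      thus "x \<in> {(0, 1), (2^(e-1), 1)}" using xa q by auto
    qed
    hence "card (H \<inter> transl e) \<le> card {(0::nat, 1::nat), (2^(e-1), 1)}" by (rule card_mono[rotated]) simp
    also have "... \<le> 2" by (rule card_insert_le_m1) simp_all
    finally show False using card by simp
  qed
  then obtain a where a: "(a, 1) \<in> H" "a < 2^e" "\<not> 2^(e-1) dvd a" by blast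
  have "a \<noteq> 0" using a(3) by (metis dvd_0_right)
  then obtain s c where sc: "a = 2^s * c" "odd c" using odd_part by blast
  have sle: "s \<le> e - 2"
  proof (rule ccontr)
    assume "\<not> s \<le> e - 2"
    hence "e - 1 \<le> s" by simp
    hence "(2::nat)^(e-1) dvd 2^s" by (rule le_imp_power_dvd)
    hence "2^(e-1) dvd a" using sc(1) by simp
    thus False using a(3) by simp
  qed
  obtain v where v: "odd v" "v < 2^e" "(c * v) mod 2^e = 1" using inv_mod_ex[OF sc(2) e0] by blast
  obtain q where q: "b = 2^(e-2) * q" using b(2) by (elim dvdE)
  define k where "k = v * q * 2^(e-2-s)"
  have "a * k = (c * v) * (2^s * 2^(e-2-s) * q)" unfolding k_def sc(1) by (simp add: algebra_simps)
  also have "2^s * 2^(e-2-s) = (2::nat)^(e-2)" using sle by (simp add: power_add[symmetric])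
  finally have ak: "a * k = (c * v) * b" using q by simp
  have "(a * k) mod 2^e = b"
  proof -
    have "(a * k) mod 2^e = (((c * v) mod 2^e) * b) mod 2^e" unfolding ak by (simp add: mod_mult_left_eq)
    also have "... = b" using v(3) b(1) by simp
    finally show ?thesis .
  qed
  hence "(a, 1) [^]\<^bsub>Hol e\<^esub> k = (b, 1)" using transl_pow[OF e0 a(2), of k] by simp
  moreover have "(a, 1) [^]\<^bsub>Hol e\<^esub> k \<in> H" by (rule pow_closed_set[OF Hm H1 a(1)])
  ultimately show "(b, 1) \<in> H" by simp
qed


lemma (in group) conj_img_subgroup:
  assumes g: "g \<in> carrier G" and H: "subgroup H G"
  shows "subgroup ((\<lambda>h. g \<otimes> h \<otimes> inv g) ` H) G"
proof -
  have "subgroup (inv (inv g) <# H #> inv g) G"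
    using subgroup_conjugation_is_surj1[of "inv g" H] g H by simp
  moreover have "inv (inv g) <# H #> inv g = (\<lambda>h. g \<otimes> h \<otimes> inv g) ` H"
    using g unfolding l_coset_def r_coset_def by auto
  ultimately show ?thesis by simp
qed

lemma (in group) core_normal:
  assumes H: "subgroup H G"
  shows "core G H \<lhd> G"
proof -
  have sub: "subgroup (core G H) G"
    unfolding core_def
  proof (rule subgroups_Inter)
    fix K assume "K \<in> (\<lambda>g. (\<lambda>h. g \<otimes> h \<otimes> inv g) ` H) ` carrier G"
    then obtain g where "g \<in> carrier G" "K = (\<lambda>h. g \<otimes> h \<otimes> inv g) ` H" by (elim imageE)
    then show "subgroup K G" using conj_img_subgroup[OF _ H] by simp
  next
    show "(\<lambda>g. (\<lambda>h. g \<otimes> h \<otimes> inv g) ` H) ` carrier G \<noteq> {}" by blast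
  qed
  have "\<forall>x\<in>carrier G. \<forall>h\<in>core G H. x \<otimes> h \<otimes> inv x \<in> core G H"
  proof (intro ballI)
    fix x h assume x: "x \<in> carrier G" and h: "h \<in> core G H"
    show "x \<otimes> h \<otimes> inv x \<in> core G H"
      unfolding core_def
    proof (rule InterI)
      fix S assume "S \<in> (\<lambda>g. (\<lambda>h. g \<otimes> h \<otimes> inv g) ` H) ` carrier G"
      then obtain g where g: "g \<in> carrier G" and S: "S = (\<lambda>h. g \<otimes> h \<otimes> inv g) ` H" by blast
      have ig: "inv x \<otimes> g \<in> carrier G" using x g by simp
      have "h \<in> (\<lambda>h. (inv x \<otimes> g) \<otimes> h \<otimes> inv (inv x \<otimes> g)) ` H"
        using INT_D[OF h[unfolded core_def] ig] .
      then obtain k where k: "k \<in> H" "h = (inv x \<otimes> g) \<otimes> k \<otimes> inv (inv x \<otimes> g)"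
        by (elim imageE) simp
      have kc: "k \<in> carrier G" using subgroup.mem_carrier[OF H k(1)] .
      have "x \<otimes> h \<otimes> inv x = g \<otimes> k \<otimes> inv g"
      proof -
        have xy: "x \<otimes> (inv x \<otimes> y) = y" if "y \<in> carrier G" for y
          using x that by (simp add: m_assoc[symmetric])
        show ?thesis using x g kc unfolding k(2) by (simp add: inv_mult_group m_assoc xy)
      qed
      then show "x \<otimes> h \<otimes> inv x \<in> S" using S k(1) by simp
    qed
  qed
  then show ?thesis using sub normal_inv_iff by simp
qed

lemma (in normal) mod_pow:
  assumes g: "g \<in> carrier G"
  shows "(H #> g) [^]\<^bsub>G Mod H\<^esub> (n::nat) = H #> (g [^] n)"
proof (induction n)
  case 0
  show ?case using coset_mult_one subset by simp
next
  case (Suc n)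
  then show ?case using g by (simp add: rcos_sum)
qed

lemma pow_upd: "x [^]\<^bsub>G\<lparr>carrier := S\<rparr>\<^esub> (n::nat) = x [^]\<^bsub>G\<^esub> n"
  by (induction n) simp_all


lemma mod_arith1:
  assumes "((a'::nat) + u' * a) mod m = 0"
  shows "((a' + u' * b) mod m + u' * a) mod m = (u' * b) mod m"
proof -
  have "((a' + u' * b) mod m + u' * a) mod m = ((a' + u' * a) + u' * b) mod m"
    by (metis mod_add_left_eq add.assoc add.commute)
  also have "... = ((a' + u' * a) mod m + u' * b) mod m" by (simp only: mod_add_left_eq)
  also have "... = (u' * b) mod m" using assms by simp
  finally show ?thesis .
qed

lemma N4_core:
  assumes e: "2 \<le> e" and G: "subgroup G (Hol e)" and H: "subgroup H ((Hol e)\<lparr>carrier := G\<rparr>)"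
    and N4: "\<And>b. b < 2^e \<Longrightarrow> 2^(e-2) dvd b \<Longrightarrow> (b, 1) \<in> H"
    and b: "b < 2^e" "2^(e-2) dvd b"
  shows "(b, 1) \<in> core ((Hol e)\<lparr>carrier := G\<rparr>) H"
  unfolding core_def
proof (rule INT_I)
  have e0: "0 < e" using e by simp
  have grp: "group (Hol e)" using Hol_group[OF e0] .
  fix g assume g: "g \<in> carrier ((Hol e)\<lparr>carrier := G\<rparr>)"
  hence gG: "g \<in> G" by simp
  have gc: "g \<in> carrier (Hol e)" using subgroup.mem_carrier[OF G gG] .
  have iv: "inv\<^bsub>(Hol e)\<lparr>carrier := G\<rparr>\<^esub> g = inv\<^bsub>Hol e\<^esub> g"
    using group.m_inv_consistent[OF grp G gG] .
  have igc: "inv\<^bsub>Hol e\<^esub> g \<in> carrier (Hol e)" using group.inv_closed[OF grp gc] .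
  obtain a u where au: "g = (a, u)" "a < 2^e" "u < 2^e" using Hol_elem[OF e0 gc] by blast
  obtain a' u' where au': "inv\<^bsub>Hol e\<^esub> g = (a', u')" "a' < 2^e" "u' < 2^e"
    using Hol_elem[OF e0 igc] by blast
  have "inv\<^bsub>Hol e\<^esub> g \<otimes>\<^bsub>Hol e\<^esub> g = (0, 1)" using group.l_inv[OF grp gc] by simp
  hence h1: "(a' + u' * a) mod 2^e = 0" "(u' * u) mod 2^e = 1" unfolding au'(1) unfolding au(1) by simp_all
  have bc: "(b, 1) \<in> carrier (Hol e)" using b e0 one_less_pow2[OF e0] by (simp add: Hol_carrier)
  define n where "n = inv\<^bsub>Hol e\<^esub> g \<otimes>\<^bsub>Hol e\<^esub> (b, 1) \<otimes>\<^bsub>Hol e\<^esub> g"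
  have "n = (((a' + u' * b) mod 2^e + u' * a) mod 2^e, (u' * u) mod 2^e)"
    unfolding n_def au'(1) unfolding au(1) using au'(3) by simp
  hence n: "n = ((u' * b) mod 2^e, 1)" using h1 mod_arith1[OF h1(1)] by simp
  have D: "(2::nat)^(e-2) dvd 2^e" by (rule le_imp_power_dvd) simp
  have "2^(e-2) dvd (u' * b) mod 2^e" unfolding dvd_mod_iff[OF D] using b(2) by simp
  hence nH: "n \<in> H" unfolding n using N4 by simp
  have "g \<otimes>\<^bsub>Hol e\<^esub> n \<otimes>\<^bsub>Hol e\<^esub> inv\<^bsub>Hol e\<^esub> g = (b, 1)"
  proof -
    interpret HG: group "Hol e" by (rule grp)
    have xy: "g \<otimes>\<^bsub>Hol e\<^esub> (inv\<^bsub>Hol e\<^esub> g \<otimes>\<^bsub>Hol e\<^esub> y) = y" if "y \<in> carrier (Hol e)" for y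
      using gc that by (simp add: HG.m_assoc[symmetric] del: Hol_one)
    show ?thesis unfolding n_def using gc bc by (simp add: HG.m_assoc xy del: Hol_one Hol_mult)
  qed
  hence "(b, 1) = g \<otimes>\<^bsub>(Hol e)\<lparr>carrier := G\<rparr>\<^esub> n \<otimes>\<^bsub>(Hol e)\<lparr>carrier := G\<rparr>\<^esub> inv\<^bsub>(Hol e)\<lparr>carrier := G\<rparr>\<^esub> g"
    unfolding iv by simp
  then show "(b, 1) \<in> (\<lambda>h. g \<otimes>\<^bsub>(Hol e)\<lparr>carrier := G\<rparr>\<^esub> h \<otimes>\<^bsub>(Hol e)\<lparr>carrier := G\<rparr>\<^esub> inv\<^bsub>(Hol e)\<lparr>carrier := G\<rparr>\<^esub> g) ` H"
    using nH by (rule image_eqI)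
qed


lemma Hol_finite: "finite (carrier (Hol e))"
proof -
  have "carrier (Hol e) \<subseteq> {..<2^e} \<times> {..<2^e}" by (auto simp: Hol_carrier)
  thus ?thesis by (rule finite_subset) simp
qed

lemma Hol2_card: "card (carrier (Hol 2)) \<le> 8"
proof -
  have "carrier (Hol 2) \<subseteq> {0..<4} \<times> {1, 3}"
  proof
    fix x assume x: "x \<in> carrier (Hol 2)"
    have z: "0 < (2::nat)" by simp
    obtain a u where au: "x = (a, u)" "a < 2^2" "u < 2^2" "odd u" using Hol_elem[OF z x] by blast
    have "u < 4" using au(3) by simp
    hence "u = 1 \<or> u = 3" using au(4) by presburger
    thus "x \<in> {0..<4} \<times> {1, 3}" using au by auto
  qed
  hence "card (carrier (Hol 2)) \<le> card ({0..<4::nat} \<times> {1, 3::nat})" by (rule card_mono[rotated]) simp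
  also have "... = 8" by (simp add: card_cartesian_product)
  finally show ?thesis .
qed

theorem proposition5p4:
  fixes e :: nat and G H :: "(nat \<times> nat) set"
  assumes "e \<ge> 2"
    and "subgroup G (Hol e)"
    and "subgroup H ((Hol e)\<lparr>carrier := G\<rparr>)"
    and "card (rcosets\<^bsub>(Hol e)\<lparr>carrier := G\<rparr>\<^esub> H) = 2 ^ e"
    and "card (H \<inter> transl e) \<ge> 4"
  shows "\<not> (\<exists>T. transitive_sub e T \<and>
           ((Hol e)\<lparr>carrier := G\<rparr> Mod core ((Hol e)\<lparr>carrier := G\<rparr>) H) \<cong> (Hol e)\<lparr>carrier := T\<rparr>)"
proof
  assume "\<exists>T. transitive_sub e T \<and>
           ((Hol e)\<lparr>carrier := G\<rparr> Mod core ((Hol e)\<lparr>carrier := G\<rparr>) H) \<cong> (Hol e)\<lparr>carrier := T\<rparr>"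
  then obtain T \<phi> where T: "transitive_sub e T"
    and \<phi>: "\<phi> \<in> iso ((Hol e)\<lparr>carrier := G\<rparr> Mod core ((Hol e)\<lparr>carrier := G\<rparr>) H) ((Hol e)\<lparr>carrier := T\<rparr>)"
    unfolding is_iso_def by blast
  have e0: "0 < e" using assms(1) by simp
  have grp: "group (Hol e)" using Hol_group[OF e0] .
  have gGs: "group ((Hol e)\<lparr>carrier := G\<rparr>)" using subgroup.subgroup_is_group[OF assms(2) grp] .
  have HG: "H \<subseteq> G" using subgroup.subset[OF assms(3)] by simp
  have GC: "G \<subseteq> carrier (Hol e)" using subgroup.subset[OF assms(2)] .
  have Hm: "\<forall>x\<in>H. \<forall>y\<in>H. x \<otimes>\<^bsub>Hol e\<^esub> y \<in> H"
    using subgroup.m_closed[OF assms(3)] by simp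
  have H1: "(0, 1) \<in> H" using subgroup.one_closed[OF assms(3)] by simp
  have N4: "\<And>b. b < 2^e \<Longrightarrow> 2^(e-2) dvd b \<Longrightarrow> (b, 1) \<in> H"
    using N4_in_H[OF assms(1) _ Hm H1 assms(5)] HG GC by blast
  show False
  proof (cases "e = 2")
    case True
    have finG: "finite G" using finite_subset[OF GC Hol_finite] .
    have finH: "finite H" using finite_subset[OF HG finG] .
    have "card (rcosets\<^bsub>(Hol e)\<lparr>carrier := G\<rparr>\<^esub> H) * card H = order ((Hol e)\<lparr>carrier := G\<rparr>)"
      using group.lagrange[OF gGs assms(3)] .
    hence eq: "2^e * card H = card G" using assms(4) by (simp add: order_def)
    have "4 \<le> card H" using assms(5) card_mono[OF finH, of "H \<inter> transl e"] by simp
    moreover have "card G \<le> 8" using card_mono[OF Hol_finite GC] Hol2_card True by simp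
    ultimately show False using eq True by simp
  next
    case False
    hence e3: "3 \<le> e" using assms(1) by simp
    obtain t where t: "t \<in> T" "t [^]\<^bsub>Hol e\<^esub> ((2::nat)^(e-2)) \<noteq> (0, 1)"
      using T_big[OF e3 T] by blast
    let ?Gs = "(Hol e)\<lparr>carrier := G\<rparr>"
    let ?C = "core ?Gs H"
    have nC: "?C \<lhd> ?Gs" using group.core_normal[OF gGs assms(3)] .
    have sC: "subgroup ?C ?Gs" using normal_imp_subgroup[OF nC] .
    have grpM: "group (?Gs Mod ?C)" using normal.factorgroup_is_group[OF nC] .
    have sgT: "subgroup T (Hol e)" using T unfolding transitive_sub_def by blast
    have grpT: "group ((Hol e)\<lparr>carrier := T\<rparr>)" using subgroup.subgroup_is_group[OF sgT grp] .
    have hom: "\<phi> \<in> hom (?Gs Mod ?C) ((Hol e)\<lparr>carrier := T\<rparr>)" using \<phi> unfolding iso_def by blast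
    have bij: "bij_betw \<phi> (carrier (?Gs Mod ?C)) T" using \<phi> unfolding iso_def by simp
    hence "\<phi> ` carrier (?Gs Mod ?C) = T" unfolding bij_betw_def by (elim conjE)
    hence "t \<in> \<phi> ` carrier (?Gs Mod ?C)" using t(1) by simp
    then obtain Y where Y': "t = \<phi> Y" "Y \<in> carrier (?Gs Mod ?C)" by (rule imageE)
    have Y: "Y \<in> carrier (?Gs Mod ?C)" "\<phi> Y = t" using Y' by simp_all
    have "Y \<in> (\<lambda>x. r_coset ?Gs ?C x) ` carrier ?Gs" using Y(1) unfolding carrier_FactGroup .
    then obtain g where g0: "Y = r_coset ?Gs ?C g" "g \<in> carrier ?Gs" by (rule imageE)
    have g: "g \<in> G" "Y = r_coset ?Gs ?C g" using g0 by simp_all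
    have gc: "g \<in> carrier (Hol e)" using subsetD[OF GC g(1)] .
    obtain b where b: "g [^]\<^bsub>Hol e\<^esub> ((2::nat)^(e-2)) = (b, 1)" "b < 2^e" "2^(e-2) dvd b"
      using G_small[OF e3 gc] by blast
    have bC: "(b, 1) \<in> ?C" using N4_core[OF assms(1) assms(2) assms(3) N4 b(2) b(3)] .
    have bG: "(b, 1) \<in> carrier ?Gs" using subgroup.mem_carrier[OF sC bC] .
    have "Y [^]\<^bsub>?Gs Mod ?C\<^esub> ((2::nat)^(e-2)) = r_coset ?Gs ?C (g [^]\<^bsub>?Gs\<^esub> ((2::nat)^(e-2)))"
      unfolding g(2) using normal.mod_pow[OF nC, of g] g(1) by simp
    also have "... = r_coset ?Gs ?C (b, 1)" unfolding pow_upd b(1) ..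
    also have "... = ?C" using group.coset_join2[OF gGs bG sC bC] .
    also have "... = \<one>\<^bsub>?Gs Mod ?C\<^esub>" by simp
    finally have Xn: "Y [^]\<^bsub>?Gs Mod ?C\<^esub> ((2::nat)^(e-2)) = \<one>\<^bsub>?Gs Mod ?C\<^esub>" .
    have "\<phi> (Y [^]\<^bsub>?Gs Mod ?C\<^esub> ((2::nat)^(e-2))) = (\<phi> Y) [^]\<^bsub>(Hol e)\<lparr>carrier := T\<rparr>\<^esub> ((2::nat)^(e-2))"
      using hom_nat_pow[OF hom Y(1) grpM grpT] .
    also have "... = t [^]\<^bsub>Hol e\<^esub> ((2::nat)^(e-2))" unfolding Y(2) pow_upd ..
    finally have "t [^]\<^bsub>Hol e\<^esub> ((2::nat)^(e-2)) = \<phi> (\<one>\<^bsub>?Gs Mod ?C\<^esub>)" unfolding Xn ..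
    also have "... = \<one>\<^bsub>(Hol e)\<lparr>carrier := T\<rparr>\<^esub>" using hom_one[OF hom grpM grpT] .
    also have "... = (0, 1)" by simp
    finally show False using t(2) by simp
  qed
qed

end
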